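(* For every real $x>0$, $$2^{x-1}<\sum_{i=0}^{\lfloor x\rfloor}\binom{x}{i}\le 2^x.$$
   Context: For real $x$ and integer $i\ge0$, $\binom{x}{i}=x(x-1)\cdots(x-i+1)/i!$. *)

theory Defs
  imports Complex_Main
begin

end

theory Submission
  imports Defs "HOL-Analysis.Generalised_Binomial_Theorem"
begin

lemma poch_nonneg: "(x::real) \<ge> 0 \<Longrightarrow> pochhammer x n \<ge> 0"
  by (simp add: pochhammer_prod prod_nonneg)

lemma step_sum:
  fixes a :: real
  shows "(\<Sum>i = 0..Suc n. (a + 1) gchoose i)
        = 2 * (\<Sum>i = 0..n. a gchoose i) + (a gchoose Suc n)"
proof -
  have "(\<Sum>i = 0..Suc n. (a + 1) gchoose i) = 1 + (\<Sum>i = 0..n. (a + 1) gchoose Suc i)"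
    by (subst sum.atLeast0_atMost_Suc_shift) simp
  also have "\<dots> = 1 + (\<Sum>i = 0..n. a gchoose i) + (\<Sum>i = 0..n. a gchoose Suc i)"
    by (simp add: gbinomial_Suc_Suc sum.distrib)
  also have "(\<Sum>i = 0..n. a gchoose Suc i) = (\<Sum>i = 0..Suc n. a gchoose i) - 1"
    by (subst sum.atLeast0_atMost_Suc_shift) simp
  also have "(\<Sum>i = 0..Suc n. a gchoose i) = (\<Sum>i = 0..n. a gchoose i) + (a gchoose Suc n)"
    by simp
  finally show ?thesis by simp
qed

theorem claimA2:
  fixes x :: real
  assumes "x > 0"
  shows "2 powr (x - 1) < (\<Sum>i = 0..nat \<lfloor>x\<rfloor>. x gchoose i)
         \<and> (\<Sum>i = 0..nat \<lfloor>x\<rfloor>. x gchoose i) \<le> 2 powr x"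
proof -
  define n where "n = nat \<lfloor>x\<rfloor>"
  define t where "t = x - real n"
  have n_eq: "real n = of_int \<lfloor>x\<rfloor>" using assms by (simp add: n_def)
  have t0: "t \<ge> 0" and t1: "t < 1" unfolding t_def n_eq by linarith+
  have xeq: "x = real n + t" by (simp add: t_def)
  define u where "u k = ((-t) gchoose k) * (-1/2::real)^k" for k
  have u_alt: "u k = ((t + real k - 1) gchoose k) / 2^k" for k
  proof -
    have "((-t) gchoose k) = (-1)^k * ((real k - (-t) - 1) gchoose k)"
      by (rule gbinomial_negated_upper)
    moreover have "(-1::real)^k * (-1/2)^k = 1/2^k"
      by (simp add: power_mult_distrib[symmetric] power_divide)
    ultimately show ?thesis unfolding u_def
      by (metis (no_types, lifting) diff_minus_eq_add add.commute mult.assoc mult.commute times_divide_eq_right mult_1_right)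
  qed
  have u_nn: "u k \<ge> 0" for k
  proof -
    have "((t + real k - 1) gchoose k) = pochhammer t k / fact k"
      by (simp add: gbinomial_pochhammer')
    moreover have "pochhammer t k \<ge> 0" using t0 by (rule poch_nonneg)
    ultimately show ?thesis by (simp add: u_alt)
  qed
  have sums: "u sums (2 powr t)"
  proof -
    have "u sums ((1 + (-1/2)) powr (-t))"
      unfolding u_def by (rule gen_binomial_real) simp
    moreover have "(1 + (-1/2::real)) powr (-t) = 2 powr t"
      by (simp add: powr_minus_divide powr_divide)
    ultimately show ?thesis by simp
  qed
  have main: "(\<Sum>i = 0..m. (real m + t) gchoose i) = 2^m * (\<Sum>k = 0..m. u k)" for m
  proof (induction m)
    case 0 then show ?case by (simp add: u_def)
  next
    case (Suc m)
    have "(\<Sum>i = 0..Suc m. (real (Suc m) + t) gchoose i)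
          = (\<Sum>i = 0..Suc m. ((real m + t) + 1) gchoose i)" by (simp add: algebra_simps)
    also have "\<dots> = 2 * (\<Sum>i = 0..m. (real m + t) gchoose i) + ((real m + t) gchoose Suc m)"
      by (rule step_sum)
    also have "((real m + t) gchoose Suc m) = 2^Suc m * u (Suc m)"
      by (simp add: u_alt algebra_simps)
    finally show ?case using Suc by (simp add: algebra_simps)
  qed
  have S: "(\<Sum>i = 0..n. x gchoose i) = 2^n * (\<Sum>k = 0..n. u k)"
    using main[of n] by (simp add: xeq)
  have lo: "(\<Sum>k = 0..n. u k) \<ge> 1"
  proof -
    have "(\<Sum>k = 0..n. u k) = u 0 + (\<Sum>k = 1..n. u k)"
      by (simp add: sum.atLeast_Suc_atMost)
    moreover have "(\<Sum>k = 1..n. u k) \<ge> 0" by (simp add: sum_nonneg u_nn)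
    moreover have "u 0 = 1" by (simp add: u_def)
    ultimately show ?thesis by simp
  qed
  have hi: "(\<Sum>k = 0..n. u k) \<le> 2 powr t"
  proof -
    have "(\<Sum>k<Suc n. u k) \<le> suminf u"
      by (rule sum_le_suminf) (use sums u_nn in \<open>auto simp: sums_iff\<close>)
    then show ?thesis using sums by (simp add: sums_iff atLeast0AtMost lessThan_Suc_atMost)
  qed
  have p1: "2 powr x = 2^n * 2 powr t"
    by (simp add: xeq powr_add powr_realpow)
  have p2: "2 powr (x - 1) < 2^n"
  proof -
    have "2 powr (x - 1) < 2 powr (real n)" using t1 by (simp add: xeq)
    then show ?thesis by (simp add: powr_realpow)
  qed
  show ?thesis unfolding n_def[symmetric] S
  proof
    have "(2::real)^n \<le> 2^n * (\<Sum>k = 0..n. u k)" using lo by simp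
    then show "2 powr (x - 1) < 2^n * (\<Sum>k = 0..n. u k)" using p2 by linarith
    show "2^n * (\<Sum>k = 0..n. u k) \<le> 2 powr x" using hi p1 by simp
  qed
qed

end
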